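(* The sequence $(h(n))_{n\ge0}$ is not strongly $3$-recursive. In fact, for any natural numbers $r<t$, the sequence $(h(3^tn))_{n\ge0}$ is not a linear combination of the sequences $(h(3^rn+a))_{n\ge0}$, $0\le a<3^r$.
   Context: Define $h:\mathbb N\to\mathbb N$ by $h(0)=0$; $h(n)=h(\lfloor n/3\rfloor)+(\lfloor n/3\rfloor \bmod 2)$ if $n>0$ and $n\equiv 0$ or $2\pmod 3$; and $h(n)=h(\lfloor n/9\rfloor)+1$ if $n\equiv1\pmod 3$. Here $x\bmod 2\in\{0,1\}$ is the least nonnegative remainder. A sequence $(f(n))_{n\ge 0}$ is strongly $k$-recursive if there exist natural numbers $r<t$ such that for every $b$ with $0\le b<k^t$, the sequence $(f(k^t n+b))_{n\ge 0}$ is a linear combination, with constant coefficients, of the sequences $(f(k^r n+a))_{n\ge0}$ with $0\le a<k^r$. *)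

theory Defs
  imports "HOL-Analysis.Analysis"
begin

function h :: "nat \<Rightarrow> nat" where
  "h n = (if n = 0 then 0
          else if n mod 3 = 1 then h (n div 9) + 1
          else h (n div 3) + (n div 3) mod 2)"
  by auto
termination
  by (relation "Wellfounded.measure id") auto

definition lin_comb_of :: "(nat \<Rightarrow> real) \<Rightarrow> (nat \<Rightarrow> nat \<Rightarrow> real) \<Rightarrow> nat \<Rightarrow> bool" where
  "lin_comb_of f g m \<longleftrightarrow> (\<exists>c :: nat \<Rightarrow> real. \<forall>n. f n = (\<Sum>a<m. c a * g a n))"

definition strongly_recursive :: "nat \<Rightarrow> (nat \<Rightarrow> real) \<Rightarrow> bool" where
  "strongly_recursive k f \<longleftrightarrow>
     (\<exists>r t. r < t \<and> (\<forall>b < k ^ t.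
        lin_comb_of (\<lambda>n. f (k ^ t * n + b)) (\<lambda>a n. f (k ^ r * n + a)) (k ^ r)))"

end

theory Submission
  imports Defs
begin

declare h.simps[simp del]

lemma h0[simp]: "h 0 = 0" by (subst h.simps) simp

lemma h_key: "h n = h (n div 3) + n mod 2"
proof (induction n rule: less_induct)
  case (less n)
  show ?case
  proof (cases "n = 0")
    case True then show ?thesis by simp
  next
    case False
    define q where "q = n div 3"
    have q: "q < n" using False by (simp add: q_def)
    show ?thesis
    proof (cases "n mod 3 = 1")
      case True
      have e1: "h n = h (n div 9) + 1" using False True by (subst h.simps) simp
      have e2: "n div 9 = q div 3" by (simp add: q_def div_mult2_eq[symmetric])
      have n3: "n = 3 * q + 1" using True div_mult_mod_eq[of n 3] unfolding q_def by linarith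
      have e3: "n mod 2 + q mod 2 = 1" unfolding n3 by presburger
      have "h q = h (q div 3) + q mod 2" using less q by blast
      moreover have "q mod 2 \<le> 1" by simp
      moreover have "h n = h (q div 3) + 1" using e1 e2 by simp
      ultimately have "h n = h q + n mod 2" using e3 by linarith
      then show ?thesis by (simp add: q_def)
    next
      case F2: False
      have e1: "h n = h q + q mod 2" using False F2 unfolding q_def by (subst h.simps) simp
      have n3: "n = 3 * q \<or> n = 3 * q + 2" using F2 div_mult_mod_eq[of n 3] mod_less_divisor[of 3 n] unfolding q_def by linarith
      have e3: "n mod 2 = q mod 2" using n3 by presburger
      show ?thesis using e1 e3 q_def by simp
    qed
  qed
qed

lemma h_shift: "a < 3 ^ r \<Longrightarrow> h (3 ^ r * n + a) = h n + (\<Sum>j<r. (n + a div 3 ^ j) mod 2)"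
proof (induction r arbitrary: a)
  case 0 then show ?case by simp
next
  case (Suc r)
  have ad: "a div 3 < 3 ^ r" using Suc.prems by simp
  have d: "(3 ^ Suc r * n + a) div 3 = 3 ^ r * n + a div 3" by simp
  have m: "(3 ^ Suc r * n + a) mod 2 = (n + a) mod 2"
  proof -
    have "odd ((3::nat) ^ Suc r)" by simp
    then obtain k where k: "(3::nat) ^ Suc r = 2 * k + 1" by (metis oddE)
    have eq: "3 ^ Suc r * n + a = (n + a) + 2 * (k * n)" unfolding k by (simp add: algebra_simps)
    show ?thesis unfolding eq by simp
  qed
  have "h (3 ^ Suc r * n + a) = h (3 ^ r * n + a div 3) + (n + a) mod 2"
    using h_key[of "3 ^ Suc r * n + a"] d m by simp
  also have "\<dots> = h n + (\<Sum>j<r. (n + a div 3 div 3 ^ j) mod 2) + (n + a) mod 2"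
    using Suc.IH[OF ad] by simp
  also have "\<dots> = h n + (\<Sum>j<Suc r. (n + a div 3 ^ j) mod 2)"
    by (simp only: sum.lessThan_Suc_shift) (simp add: div_mult2_eq)
  finally show ?case .
qed

lemma main2:
  assumes "r < t"
  shows "\<not> lin_comb_of (\<lambda>n. real (h (3 ^ t * n))) (\<lambda>a n. real (h (3 ^ r * n + a))) (3 ^ r)"
proof
  assume "lin_comb_of (\<lambda>n. real (h (3 ^ t * n))) (\<lambda>a n. real (h (3 ^ r * n + a))) (3 ^ r)"
  then obtain c where c: "\<And>n. real (h (3 ^ t * n)) = (\<Sum>a<3^r. c a * real (h (3 ^ r * n + a)))"
    unfolding lin_comb_of_def by blast
  have p3: "(3 + x) mod 2 = (1 + x) mod 2" for x :: nat by presburger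
  have p1: "real ((1 + x) mod 2) + real ((0 + x) mod 2) = 1" for x :: nat
  proof -
    have "(1 + x) mod 2 + x mod 2 = 1" by presburger
    then show ?thesis by (metis add_0 of_nat_1 of_nat_add)
  qed
  define d0 where "d0 a = (\<Sum>j<r. (0 + a div 3 ^ j) mod 2)" for a :: nat
  define d1 where "d1 a = (\<Sum>j<r. (1 + a div 3 ^ j) mod 2)" for a :: nat
  define d3 where "d3 a = (\<Sum>j<r. (3 + a div 3 ^ j) mod 2)" for a :: nat
  have d13: "d3 a = d1 a" for a unfolding d1_def d3_def using p3 by simp
  have d01: "real (d1 a) = real r - real (d0 a)" for a
  proof -
    have "real (d1 a) + real (d0 a) = (\<Sum>j<r. real ((1 + a div 3 ^ j) mod 2) + real ((0 + a div 3 ^ j) mod 2))"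
      unfolding d0_def d1_def by (simp add: sum.distrib)
    also have "\<dots> = (\<Sum>j<r. 1)" using p1 by simp
    finally show ?thesis by simp
  qed
  have h1: "h 1 = 1" using h_key[of 1] by simp
  have h3: "h 3 = 2" using h_key[of 3] h1 by simp
  have ht: "h (3 ^ t * n) = h n + t * (n mod 2)" for n
    using h_shift[of 0 t n] by simp
  have "real (h (3 ^ t * 0)) = (\<Sum>a<3^r. c a * real (h (3 ^ r * 0 + a)))" by (rule c)
  hence E0: "0 = (\<Sum>a<3^r. c a * real (d0 a))"
    using h_shift[of _ r 0] by (simp add: d0_def)
  have "real (h (3 ^ t * 1)) = (\<Sum>a<3^r. c a * real (h (3 ^ r * 1 + a)))" by (rule c)
  hence E1: "1 + real t = (\<Sum>a<3^r. c a * (1 + real (d1 a)))"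
    using ht[of 1] h_shift[of _ r 1] h1 by (simp add: d1_def)
  have "real (h (3 ^ t * 3)) = (\<Sum>a<3^r. c a * real (h (3 ^ r * 3 + a)))" by (rule c)
  hence E3: "2 + real t = (\<Sum>a<3^r. c a * (2 + real (d1 a)))"
    using ht[of 3] h_shift[of _ r 3] h3 d13 by (simp add: d3_def [symmetric])
  have "(\<Sum>a<3^r. c a * (2 + real (d1 a))) - (\<Sum>a<3^r. c a * (1 + real (d1 a))) = (\<Sum>a<3^r. c a)"
    by (simp add: sum_subtractf[symmetric] algebra_simps)
  hence S: "(\<Sum>a<3^r. c a) = 1" using E1 E3 by simp
  have "(\<Sum>a<3^r. c a * (1 + real (d1 a))) = (\<Sum>a<3^r. c a) + real r * (\<Sum>a<3^r. c a) - (\<Sum>a<3^r. c a * real (d0 a))"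
    by (simp add: d01 algebra_simps sum.distrib sum_subtractf sum_distrib_left)
  hence "1 + real t = 1 + real r" using E1 E0 S by simp
  thus False using assms by simp
qed

theorem mainTheorem11:
  shows "\<not> strongly_recursive 3 (\<lambda>n. real (h n)) \<and>
    (\<forall>r t :: nat. r < t \<longrightarrow>
       \<not> lin_comb_of (\<lambda>n. real (h (3 ^ t * n))) (\<lambda>a n. real (h (3 ^ r * n + a))) (3 ^ r))"
proof
  show "\<not> strongly_recursive 3 (\<lambda>n. real (h n))"
  proof
    assume "strongly_recursive 3 (\<lambda>n. real (h n))"
    then obtain r t where rt: "r < t" and
      L: "\<forall>b < 3 ^ t. lin_comb_of (\<lambda>n. real (h (3 ^ t * n + b))) (\<lambda>a n. real (h (3 ^ r * n + a))) (3 ^ r)"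
      unfolding strongly_recursive_def by blast
    have "lin_comb_of (\<lambda>n. real (h (3 ^ t * n + 0))) (\<lambda>a n. real (h (3 ^ r * n + a))) (3 ^ r)"
      using L[rule_format, of 0] by simp
    then show False using main2[OF rt] by simp
  qed
  show "\<forall>r t :: nat. r < t \<longrightarrow>
       \<not> lin_comb_of (\<lambda>n. real (h (3 ^ t * n))) (\<lambda>a n. real (h (3 ^ r * n + a))) (3 ^ r)"
    using main2 by blast
qed

end
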